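(* Consider the minimax Markov control model on Borel spaces described in the context, let $\rho,h:{\cal X}\to[0,\infty)$ be bounded, continuous, measurable functions whose suprema and infima over ${\cal X}$ are attained, and let $\varphi\in\mathbb{F}$ be a selector. Then $(\rho,h,\varphi)$ is a canonical triplet if and only if for every $x\in{\cal X}$: (a) $\displaystyle\rho(x)=\inf_{u\in{\cal U}(x)}\sup_{Q(\cdot|x,u)\in\mathbf{B}_R(Q^o)(x,u)}\int_{\cal X}\rho(z)\,Q(dz|x,u)$; (b) $\displaystyle\rho(x)+h(x)=\inf_{u\in{\cal U}(x)}\sup_{Q(\cdot|x,u)\in\mathbf{B}_R(Q^o)(x,u)}\Big\{f(x,u)+\int_{\cal X}h(z)\,Q(dz|x,u)\Big\}$; (c) $\varphi(x)$ attains the infimum in both (a) and (b), i.e. $\displaystyle\rho(x)=\sup_{Q(\cdot|x,\varphi(x))\in\mathbf{B}_R(Q^o)(x,\varphi(x))}\int_{\cal X}\rho(z)Q(dz|x,\varphi(x))$ and $\displaystyle\rho(x)+h(x)=\sup_{Q(\cdot|x,\varphi(x))\in\mathbf{B}_R(Q^o)(x,\varphi(x))}\Big\{f(x,\varphi(x))+\int_{\cal X}h(z)Q(dz|x,\varphi(x))\Big\}$.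
   Context: Model: ${\cal X},{\cal U}$ are Polish spaces with Borel $\sigma$-algebras; for each $x$, ${\cal U}(x)\subseteq{\cal U}$ is a nonempty compact measurable set of feasible controls; $\mathbb{K}=\{(x,u):x\in{\cal X},u\in{\cal U}(x)\}$; $\mathbb{F}$ is the (assumed nonempty) set of measurable maps $\varphi:{\cal X}\to{\cal U}$ with $\varphi(x)\in{\cal U}(x)$ for all $x$ (selectors). $f:\mathbb{K}\to[0,\infty)$ is bounded and continuous; $Q^o(\cdot|x,u)$ is a stochastic kernel on ${\cal X}$ given $(x,u)\in\mathbb{K}$ with $Q^o(A|\cdot,\cdot)$ continuous on $\mathbb{K}$ for every Borel $A$. For probability measures, $\|\alpha-\beta\|_{TV}=\sup_P\sum_{F\in P}|\alpha(F)-\beta(F)|$, supremum over finite measurable partitions $P$ of ${\cal X}$. $R\in[0,2]$ and $\mathbf{B}_R(Q^o)(x,u)=\{Q(\cdot|x,u)\text{ probability on }{\cal X}:\|Q(\cdot|x,u)-Q^o(\cdot|x,u)\|_{TV}\le R\}$. Minimax $n$-stage costs with terminal cost $h$: $J_0^*(x,h)=h(x)$ and $J^*_{n+1}(x,h)=\inf_{u\in{\cal U}(x)}\sup_{Q(\cdot|x,u)\in\mathbf{B}_R(Q^o)(x,u)}\{f(x,u)+\int J^*_n(z,h)Q(dz|x,u)\}$; for the stationary policy $g^\infty$ that uses $\varphi$ at every stage, $J_0(g^\infty,x,h)=h(x)$ and $J_{n+1}(g^\infty,x,h)=\sup_{Q(\cdot|x,\varphi(x))\in\mathbf{B}_R(Q^o)(x,\varphi(x))}\{f(x,\varphi(x))+\int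 J_n(g^\infty,z,h)Q(dz|x,\varphi(x))\}$. Canonical triplet: $(\rho,h,\varphi)$, with $\rho,h$ real-valued bounded continuous nonnegative measurable functions on ${\cal X}$ and $\varphi\in\mathbb{F}$, is canonical if $J_n(g^\infty,x,h)=J^*_n(x,h)=n\rho(x)+h(x)$ for all $x\in{\cal X}$ and all $n=0,1,2,\dots$. *)

theory Defs
  imports "HOL-Probability.Probability"
begin

definition tv_dist :: "'a::topological_space measure \<Rightarrow> 'a measure \<Rightarrow> real" where
  "tv_dist \<alpha> \<beta> = Sup {(\<Sum>F\<in>P. \<bar>measure \<alpha> F - measure \<beta> F\<bar>) | P.
      finite P \<and> P \<subseteq> sets borel \<and> disjoint P \<and> \<Union>P = UNIV}"

definition tv_ball :: "real \<Rightarrow> 'a::topological_space measure \<Rightarrow> 'a measure set" where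
  "tv_ball R Q0 = {Q. sets Q = sets borel \<and> prob_space Q \<and> tv_dist Q Q0 \<le> R}"

primrec Jstar :: "('x::topological_space \<Rightarrow> 'u set) \<Rightarrow> ('x \<Rightarrow> 'u \<Rightarrow> real)
    \<Rightarrow> ('x \<Rightarrow> 'u \<Rightarrow> 'x measure) \<Rightarrow> real \<Rightarrow> nat \<Rightarrow> ('x \<Rightarrow> real) \<Rightarrow> 'x \<Rightarrow> real" where
  "Jstar U f Qo R 0 h x = h x"
| "Jstar U f Qo R (Suc n) h x =
     (INF u\<in>U x. SUP Q\<in>tv_ball R (Qo x u). f x u + integral\<^sup>L Q (Jstar U f Qo R n h))"

primrec Jpol :: "('x::topological_space \<Rightarrow> 'u) \<Rightarrow> ('x \<Rightarrow> 'u \<Rightarrow> real)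
    \<Rightarrow> ('x \<Rightarrow> 'u \<Rightarrow> 'x measure) \<Rightarrow> real \<Rightarrow> nat \<Rightarrow> ('x \<Rightarrow> real) \<Rightarrow> 'x \<Rightarrow> real" where
  "Jpol \<phi> f Qo R 0 h x = h x"
| "Jpol \<phi> f Qo R (Suc n) h x =
     (SUP Q\<in>tv_ball R (Qo x (\<phi> x)). f x (\<phi> x) + integral\<^sup>L Q (Jpol \<phi> f Qo R n h))"

definition selectors :: "('x::topological_space \<Rightarrow> 'u::topological_space set) \<Rightarrow> ('x \<Rightarrow> 'u) set" where
  "selectors U = {\<phi>. \<phi> \<in> borel_measurable borel \<and> (\<forall>x. \<phi> x \<in> U x)}"

definition canonical_triplet ::
  "('x::topological_space \<Rightarrow> 'u::topological_space set) \<Rightarrow> ('x \<Rightarrow> 'u \<Rightarrow> real)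
    \<Rightarrow> ('x \<Rightarrow> 'u \<Rightarrow> 'x measure) \<Rightarrow> real
    \<Rightarrow> ('x \<Rightarrow> real) \<Rightarrow> ('x \<Rightarrow> real) \<Rightarrow> ('x \<Rightarrow> 'u) \<Rightarrow> bool" where
  "canonical_triplet U f Qo R \<rho> h \<phi> \<longleftrightarrow>
     bounded (range \<rho>) \<and> continuous_on UNIV \<rho> \<and> (\<forall>x. 0 \<le> \<rho> x) \<and> \<rho> \<in> borel_measurable borel \<and>
     bounded (range h) \<and> continuous_on UNIV h \<and> (\<forall>x. 0 \<le> h x) \<and> h \<in> borel_measurable borel \<and>
     \<phi> \<in> selectors U \<and>
     (\<forall>n x. Jpol \<phi> f Qo R n h x = Jstar U f Qo R n h x \<and>
            Jstar U f Qo R n h x = real n * \<rho> x + h x)"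

end

theory Submission
  imports Defs
begin


lemma int_bounds:
  fixes g :: "'a::topological_space \<Rightarrow> real"
  assumes "prob_space Q" "sets Q = sets borel" "g \<in> borel_measurable borel"
    "\<And>z. 0 \<le> g z" "\<And>z. g z \<le> K"
  shows "integrable Q g \<and> 0 \<le> integral\<^sup>L Q g \<and> integral\<^sup>L Q g \<le> K"
proof -
  interpret prob_space Q by fact
  have m: "g \<in> borel_measurable Q" using assms(2,3) measurable_cong_sets by blast
  have i: "integrable Q g"
    by (rule integrable_const_bound[where B=K]) (use assms m in auto)
  show ?thesis using i assms by (auto intro!: integral_le_const)
qed

lemma disj_fam: "disjoint P \<Longrightarrow> disjoint_family_on id P"
  by (auto simp: disjoint_def disjoint_family_on_def)

lemma part_sum_le:
  assumes "finite_measure M" "finite_measure N" "sets M = sets borel" "sets N = sets borel"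
    "finite P" "P \<subseteq> sets borel" "disjoint P"
  shows "(\<Sum>F\<in>P. \<bar>measure M F - measure N F\<bar>) \<le> measure M (\<Union>P) + measure N (\<Union>P)"
proof -
  have "(\<Sum>F\<in>P. \<bar>measure M F - measure N F\<bar>) \<le> (\<Sum>F\<in>P. measure M F + measure N F)"
    by (rule sum_mono) (smt (verit) measure_nonneg)
  also have "\<dots> = (\<Sum>F\<in>P. measure M F) + (\<Sum>F\<in>P. measure N F)" by (simp add: sum.distrib)
  also have "(\<Sum>F\<in>P. measure M F) = measure M (\<Union>P)"
    using finite_measure.finite_measure_finite_Union[OF assms(1) assms(5), of id] assms disj_fam[OF assms(7)]
    by (simp add: Sup_set_def)
  also have "(\<Sum>F\<in>P. measure N F) = measure N (\<Union>P)"
    using finite_measure.finite_measure_finite_Union[OF assms(2) assms(5), of id] assms disj_fam[OF assms(7)]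
    by (simp add: Sup_set_def)
  finally show ?thesis .
qed

lemma tv_bdd:
  assumes "prob_space M" "prob_space N" "sets M = sets borel" "sets N = sets borel"
  shows "bdd_above {(\<Sum>F\<in>P. \<bar>measure M F - measure N F\<bar>) | P.
      finite P \<and> P \<subseteq> sets borel \<and> disjoint P \<and> \<Union>P = UNIV}"
proof (rule bdd_aboveI[where M=2], clarify)
  fix P :: "'a set set" assume P: "finite P" "P \<subseteq> sets borel" "disjoint P" "\<Union>P = UNIV"
  have "(\<Sum>F\<in>P. \<bar>measure M F - measure N F\<bar>) \<le> measure M (\<Union>P) + measure N (\<Union>P)"
    using part_sum_le[OF prob_space.finite_measure[OF assms(1)] prob_space.finite_measure[OF assms(2)] assms(3,4) P(1-3)] .
  also have "\<dots> \<le> 2" using prob_space.prob_le_1[OF assms(1)] prob_space.prob_le_1[OF assms(2)]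
    by (smt (verit))
  finally show "(\<Sum>F\<in>P. \<bar>measure M F - measure N F\<bar>) \<le> 2" .
qed

lemma tv_self:
  assumes "prob_space M" "sets M = sets borel"
  shows "tv_dist M M = 0"
proof -
  have "{(\<Sum>F\<in>P. \<bar>measure M F - measure M F\<bar>) | P.
      finite P \<and> P \<subseteq> sets borel \<and> disjoint P \<and> \<Union>P = UNIV} = {0::real}"
  proof -
    have "{UNIV} \<subseteq> sets (borel::'a measure)" by simp
    then show ?thesis by (auto intro!: exI[of _ "{UNIV}"] simp: disjoint_def)
  qed
  then show ?thesis unfolding tv_dist_def by simp
qed

lemma tv_zero_eq:
  assumes "prob_space M" "prob_space N" "sets M = sets borel" "sets N = sets borel"
    and "tv_dist M N \<le> 0"
  shows "M = N"
proof (rule measure_eqI)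
  show "sets M = sets N" using assms by simp
  fix A assume A: "A \<in> sets M"
  hence Ab: "A \<in> sets borel" "-A \<in> sets borel" using assms by auto
  let ?P = "{A, -A}"
  have ne: "A \<noteq> -A" by auto
  have "\<bar>measure M A - measure N A\<bar> \<le> (\<Sum>F\<in>?P. \<bar>measure M F - measure N F\<bar>)"
    using ne by simp
  also have "\<dots> \<le> tv_dist M N" unfolding tv_dist_def
    by (rule cSup_upper[OF _ tv_bdd[OF assms(1-4)]]) (use Ab in \<open>auto simp: disjoint_def\<close>)
  finally have "measure M A = measure N A" using assms(5) by simp
  then show "emeasure M A = emeasure N A"
    using assms prob_space.finite_measure by (metis finite_measure.emeasure_eq_measure)
qed



lemma mixture:
  fixes N :: "'a::topological_space measure"
  assumes N: "prob_space N" "sets N = sets borel" and t: "0 \<le> t" "t \<le> 1"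
  shows "\<exists>Q. sets Q = sets borel \<and> prob_space Q \<and>
     (\<forall>A\<in>sets borel. measure Q A = (1-t) * measure N A + t * indicator A xm) \<and>
     tv_dist Q N \<le> 2*t"
proof -
  define \<mu> where "\<mu> A = ennreal (1-t) * emeasure N A + ennreal t * indicator A xm" for A
  define Q where "Q = measure_of UNIV (sets borel) \<mu>"
  have sa: "sigma_algebra UNIV (sets (borel::'a measure))"
    using sets.sigma_algebra_axioms[of borel] by simp
  have pos: "positive (sets borel) \<mu>" by (simp add: positive_def \<mu>_def)
  have ca: "countably_additive (sets borel) \<mu>"
  proof (rule countably_additiveI)
    fix A :: "nat \<Rightarrow> 'a set" assume A: "range A \<subseteq> sets borel" "disjoint_family A"
    have "(\<Sum>i. \<mu> (A i)) = (\<Sum>i. ennreal (1-t) * emeasure N (A i)) + (\<Sum>i. ennreal t * indicator (A i) xm)"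
      unfolding \<mu>_def by (rule suminf_add[symmetric]) auto
    also have "\<dots> = ennreal (1-t) * (\<Sum>i. emeasure N (A i)) + ennreal t * (\<Sum>i. indicator (A i) xm)"
      by (simp add: ennreal_suminf_cmult)
    also have "\<dots> = \<mu> (\<Union>i. A i)"
      unfolding \<mu>_def using A N by (simp add: suminf_emeasure suminf_indicator)
    finally show "(\<Sum>i. \<mu> (A i)) = \<mu> (\<Union>i. A i)" .
  qed
  have sQ: "sets Q = sets borel" unfolding Q_def using sigma_algebra.sigma_sets_eq[OF sa] by (simp add: sets_measure_of_conv)
  have spQ: "space Q = UNIV" unfolding Q_def by (simp add: space_measure_of_conv)
  have eQ: "emeasure Q A = \<mu> A" if "A \<in> sets borel" for A
    unfolding Q_def by (rule emeasure_measure_of_sigma[OF sa pos ca that])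
  have muR: "\<mu> A = ennreal ((1-t) * measure N A + t * indicator A xm)" for A
  proof -
    have "emeasure N A = ennreal (measure N A)"
      using N by (simp add: finite_measure.emeasure_eq_measure prob_space.finite_measure)
    then show ?thesis unfolding \<mu>_def using t
      by (subst ennreal_plus) (auto simp: ennreal_mult ennreal_indicator measure_nonneg)
  qed
  have mQ: "measure Q A = (1-t) * measure N A + t * indicator A xm" if "A \<in> sets borel" for A
    by (rule measure_eq_emeasure_eq_ennreal) (use eQ[OF that] muR[of A] t in \<open>auto simp: measure_nonneg\<close>)
  have spN: "space N = UNIV" using sets_eq_imp_space_eq[OF N(2)] by simp
  have N1: "measure N UNIV = 1" using prob_space.prob_space[OF N(1)] spN by simp
  have pQ: "prob_space Q"
  proof (rule prob_spaceI)
    have "\<mu> UNIV = 1" unfolding muR N1 by simp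
    then show "emeasure Q (space Q) = 1" using eQ[of UNIV] spQ by simp
  qed
  have R: "prob_space (return borel xm)" by (rule prob_space_return) simp
  have tv: "tv_dist Q N \<le> 2*t" unfolding tv_dist_def
  proof (rule cSup_least)
    show "{(\<Sum>F\<in>P. \<bar>measure Q F - measure N F\<bar>) | P.
      finite P \<and> P \<subseteq> sets borel \<and> disjoint P \<and> \<Union>P = UNIV} \<noteq> {}"
      by (auto intro!: exI[of _ "{UNIV}"] simp: disjoint_def)
  next
    fix y assume "y \<in> {(\<Sum>F\<in>P. \<bar>measure Q F - measure N F\<bar>) | P.
      finite P \<and> P \<subseteq> sets borel \<and> disjoint P \<and> \<Union>P = UNIV}"
    then obtain P where P: "finite P" "P \<subseteq> sets borel" "disjoint P" "\<Union>P = UNIV"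
      and y: "y = (\<Sum>F\<in>P. \<bar>measure Q F - measure N F\<bar>)" by auto
    have "y = (\<Sum>F\<in>P. t * \<bar>measure (return borel xm) F - measure N F\<bar>)"
      unfolding y
    proof (rule sum.cong[OF refl])
      fix F assume "F \<in> P"
      then have F: "F \<in> sets borel" using P by auto
      show "\<bar>measure Q F - measure N F\<bar> = t * \<bar>measure (return borel xm) F - measure N F\<bar>"
      proof -
        have "measure Q F - measure N F = t * (indicator F xm - measure N F)"
          using mQ[OF F] by (simp add: algebra_simps)
        then show ?thesis using measure_return[of F borel xm] F t by (simp add: abs_mult)
      qed
    qed
    also have "\<dots> = t * (\<Sum>F\<in>P. \<bar>measure (return borel xm) F - measure N F\<bar>)"
      by (simp add: sum_distrib_left)
    also have "\<dots> \<le> t * (measure (return borel xm) (\<Union>P) + measure N (\<Union>P))"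
      using part_sum_le[OF prob_space.finite_measure[OF R] prob_space.finite_measure[OF N(1)] _ N(2) P(1-3)] t
      by (simp add: mult_left_mono)
    also have "\<dots> = 2*t" using P(4) prob_space.prob_space[OF N(1)] measure_return[of UNIV borel xm]
      by (simp add: N1)
    finally show "y \<le> 2*t" .
  qed
  show ?thesis using sQ pQ mQ tv by blast
qed



lemma arch_le0:
  fixes x K :: real
  assumes "\<And>n::nat. n > 0 \<Longrightarrow> real n * x \<le> K"
  shows "x \<le> 0"
proof (rule ccontr)
  assume "\<not> x \<le> 0" hence x: "x > 0" by simp
  obtain n :: nat where n: "max 1 (K / x) < real n" using reals_Archimedean2 by blast
  hence "n > 0" by simp
  from assms[OF this] have "real n * x \<le> K" .
  moreover have "K < real n * x" using n x by (simp add: field_simps)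
  ultimately show False by simp
qed

lemma L1:
  fixes a b :: "'q \<Rightarrow> 'u \<Rightarrow> real"
  assumes A: "A \<noteq> {}" and B: "\<And>u. u \<in> A \<Longrightarrow> B u \<noteq> {}"
    and ab: "\<And>u Q. u \<in> A \<Longrightarrow> Q \<in> B u \<Longrightarrow> \<bar>a Q u\<bar> \<le> M"
    and bb: "\<And>u Q. u \<in> A \<Longrightarrow> Q \<in> B u \<Longrightarrow> 0 \<le> b Q u \<and> b Q u \<le> C"
    and eq: "\<And>n. (INF u\<in>A. SUP Q\<in>B u. real n * a Q u + b Q u) = real n * r + c"
  shows "r = (INF u\<in>A. SUP Q\<in>B u. a Q u)"
proof -
  define G where "G u = (SUP Q\<in>B u. a Q u)" for u
  define S where "S n u = (SUP Q\<in>B u. real n * a Q u + b Q u)" for n u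
  define IG where "IG = (INF u\<in>A. G u)"
  have bdda: "bdd_above ((\<lambda>Q. a Q u) ` B u)" if "u \<in> A" for u
    using ab[OF that] by (intro bdd_aboveI[where M=M]) (auto simp: abs_le_iff)
  have aG: "a Q u \<le> G u" if "u \<in> A" "Q \<in> B u" for u Q
    unfolding G_def by (rule cSUP_upper[OF that(2) bdda[OF that(1)]])
  have Gb: "- M \<le> G u" if u: "u \<in> A" for u
  proof -
    obtain Q where "Q \<in> B u" using B[OF u] by blast
    then show ?thesis using aG[OF u] ab[OF u] by (smt (verit))
  qed
  have bdds: "bdd_above ((\<lambda>Q. real n * a Q u + b Q u) ` B u)" if "u \<in> A" for u n
  proof (intro bdd_aboveI[where M="real n * M + C"], clarify)
    fix Q assume "Q \<in> B u"
    then show "real n * a Q u + b Q u \<le> real n * M + C"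
      using ab[OF that] bb[OF that] by (smt (verit) abs_le_iff mult_left_mono of_nat_0_le_iff)
  qed
  have S_le: "S n u \<le> real n * G u + C" if "u \<in> A" for u n
    unfolding S_def
  proof (rule cSUP_least[OF B[OF that]])
    fix Q assume Q: "Q \<in> B u"
    show "real n * a Q u + b Q u \<le> real n * G u + C"
      using aG[OF that Q] bb[OF that Q] by (smt (verit) mult_left_mono of_nat_0_le_iff)
  qed
  have S_ge: "real n * G u \<le> S n u" if "u \<in> A" "n > 0" for u n
  proof -
    have "G u \<le> S n u / real n" unfolding G_def
    proof (rule cSUP_least[OF B[OF that(1)]])
      fix Q assume Q: "Q \<in> B u"
      have "real n * a Q u + b Q u \<le> S n u"
        unfolding S_def by (rule cSUP_upper[OF Q bdds[OF that(1)]])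
      then have "real n * a Q u \<le> S n u" using bb[OF that(1) Q] by simp
      then show "a Q u \<le> S n u / real n" using that(2) by (simp add: field_simps)
    qed
    then show ?thesis using that(2) by (simp add: field_simps)
  qed
  have bddG: "bdd_below (G ` A)" by (rule bdd_belowI[where m="-M"]) (use Gb in auto)
  have IGle: "IG \<le> G u" if "u \<in> A" for u unfolding IG_def by (rule cINF_lower[OF bddG that])
  have bddS: "bdd_below (S n ` A)" for n
  proof (rule bdd_belowI[where m="real n * (- M)"], clarify)
    fix u assume u: "u \<in> A"
    obtain Q where Q: "Q \<in> B u" using B[OF u] by blast
    have 1: "real n * a Q u + b Q u \<le> S n u"
      unfolding S_def by (rule cSUP_upper[OF Q bdds[OF u]])
    have 2: "real n * (- M) + 0 \<le> real n * a Q u + b Q u" using ab[OF u Q] bb[OF u Q]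
      by (smt (verit) abs_le_iff mult_left_mono of_nat_0_le_iff)
    show "real n * (- M) \<le> S n u" using 1 2 by simp
  qed
  have eqS: "(INF u\<in>A. S n u) = real n * r + c" for n using eq[of n] unfolding S_def .
  have low: "real n * IG \<le> real n * r + c" if "n > 0" for n
  proof -
    have "real n * IG \<le> (INF u\<in>A. S n u)"
    proof (rule cINF_greatest[OF A])
      fix u assume u: "u \<in> A"
      show "real n * IG \<le> S n u" using S_ge[OF u that] IGle[OF u]
        by (smt (verit) mult_left_mono of_nat_0_le_iff)
    qed
    then show ?thesis using eqS by simp
  qed
  have up: "real n * r + c \<le> real n * IG + C" if "n > 0" for n
  proof -
    have "(INF u\<in>A. S n u) \<le> real n * IG + C"
    proof -
      have "((INF u\<in>A. S n u) - C) / real n \<le> IG" unfolding IG_def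
      proof (rule cINF_greatest[OF A])
        fix u assume u: "u \<in> A"
        have "(INF u\<in>A. S n u) \<le> S n u" by (rule cINF_lower[OF bddS u])
        then have "(INF u\<in>A. S n u) - C \<le> real n * G u" using S_le[OF u, of n] by simp
        then show "((INF u\<in>A. S n u) - C) / real n \<le> G u" using that by (simp add: field_simps)
      qed
      then show ?thesis using that by (simp add: field_simps)
    qed
    then show ?thesis using eqS by simp
  qed
  have "IG - r \<le> 0"
    by (rule arch_le0[where K=c]) (use low in \<open>simp add: algebra_simps\<close>)
  moreover have "r - IG \<le> 0"
    by (rule arch_le0[where K="C - c"]) (use up in \<open>force simp add: algebra_simps\<close>)
  ultimately show ?thesis unfolding IG_def G_def by simp
qed



lemma SUP_plus_const:
  fixes g :: "'q \<Rightarrow> real"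
  assumes "B \<noteq> {}" "bdd_above (g ` B)"
  shows "(SUP Q\<in>B. k + g Q) = k + (SUP Q\<in>B. g Q)"
proof (rule antisym)
  show "(SUP Q\<in>B. k + g Q) \<le> k + (SUP Q\<in>B. g Q)"
    by (rule cSUP_least[OF assms(1)]) (simp add: cSUP_upper[OF _ assms(2)])
  have b2: "bdd_above ((\<lambda>Q. k + g Q) ` B)" using assms(2)
    by (auto simp: bdd_above_def) (metis add_le_cancel_left)
  have "(SUP Q\<in>B. g Q) \<le> (SUP Q\<in>B. k + g Q) - k"
    by (rule cSUP_least[OF assms(1)]) (use cSUP_upper[OF _ b2] in force)
  then show "k + (SUP Q\<in>B. g Q) \<le> (SUP Q\<in>B. k + g Q)" by simp
qed

lemma in_ball: "Q \<in> tv_ball R N \<Longrightarrow> prob_space Q \<and> sets Q = sets borel"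
  by (simp add: tv_ball_def)

lemma int_lin:
  fixes \<rho> h :: "'a::topological_space \<Rightarrow> real"
  assumes "Q \<in> tv_ball R N" "\<rho> \<in> borel_measurable borel" "h \<in> borel_measurable borel"
    "\<And>z. 0 \<le> \<rho> z" "\<And>z. \<rho> z \<le> K1" "\<And>z. 0 \<le> h z" "\<And>z. h z \<le> K2"
  shows "integral\<^sup>L Q (\<lambda>z. c * \<rho> z + h z) = c * integral\<^sup>L Q \<rho> + integral\<^sup>L Q h"
proof -
  have i1: "integrable Q \<rho>" using int_bounds[of Q \<rho> K1] in_ball[OF assms(1)] assms by blast
  have i2: "integrable Q h" using int_bounds[of Q h K2] in_ball[OF assms(1)] assms by blast
  show ?thesis using i1 i2 by simp
qed



theorem mainTheorem4:
  fixes U :: "'x::polish_space \<Rightarrow> 'u::polish_space set"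
    and f :: "'x \<Rightarrow> 'u \<Rightarrow> real"
    and Qo :: "'x \<Rightarrow> 'u \<Rightarrow> 'x measure"
    and R :: real
    and \<rho> h :: "'x \<Rightarrow> real"
    and \<phi> :: "'x \<Rightarrow> 'u"
  assumes U_ne: "\<And>x. U x \<noteq> {}"
    and U_compact: "\<And>x. compact (U x)"
    and U_meas: "\<And>x. U x \<in> sets borel"
    and F_ne: "selectors U \<noteq> {}"
    and f_nonneg: "\<And>x u. u \<in> U x \<Longrightarrow> 0 \<le> f x u"
    and f_bounded: "bounded ((\<lambda>(x, u). f x u) ` (SIGMA x:UNIV. U x))"
    and f_cont: "continuous_on (SIGMA x:UNIV. U x) (\<lambda>(x, u). f x u)"
    and Qo_sets: "\<And>x u. u \<in> U x \<Longrightarrow> sets (Qo x u) = sets borel"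
    and Qo_prob: "\<And>x u. u \<in> U x \<Longrightarrow> prob_space (Qo x u)"
    and Qo_cont: "\<And>A. A \<in> sets borel \<Longrightarrow>
        continuous_on (SIGMA x:UNIV. U x) (\<lambda>(x, u). measure (Qo x u) A)"
    and R_range: "0 \<le> R" "R \<le> 2"
    and rho_bounded: "bounded (range \<rho>)"
    and rho_cont: "continuous_on UNIV \<rho>"
    and rho_nonneg: "\<And>x. 0 \<le> \<rho> x"
    and rho_meas: "\<rho> \<in> borel_measurable borel"
    and rho_sup: "\<exists>x0. \<forall>x. \<rho> x \<le> \<rho> x0"
    and rho_inf: "\<exists>x0. \<forall>x. \<rho> x0 \<le> \<rho> x"
    and h_bounded: "bounded (range h)"
    and h_cont: "continuous_on UNIV h"
    and h_nonneg: "\<And>x. 0 \<le> h x"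
    and h_meas: "h \<in> borel_measurable borel"
    and h_sup: "\<exists>x0. \<forall>x. h x \<le> h x0"
    and h_inf: "\<exists>x0. \<forall>x. h x0 \<le> h x"
    and phi_sel: "\<phi> \<in> selectors U"
  shows "canonical_triplet U f Qo R \<rho> h \<phi> \<longleftrightarrow>
    (\<forall>x.
       \<rho> x = (INF u\<in>U x. SUP Q\<in>tv_ball R (Qo x u). integral\<^sup>L Q \<rho>) \<and>
       \<rho> x + h x = (INF u\<in>U x. SUP Q\<in>tv_ball R (Qo x u). f x u + integral\<^sup>L Q h) \<and>
       \<rho> x = (SUP Q\<in>tv_ball R (Qo x (\<phi> x)). integral\<^sup>L Q \<rho>) \<and>
       \<rho> x + h x = (SUP Q\<in>tv_ball R (Qo x (\<phi> x)). f x (\<phi> x) + integral\<^sup>L Q h))"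
proof -
  obtain xM where xM: "\<And>x. \<rho> x \<le> \<rho> xM" using rho_sup by blast
  obtain xm where xm: "\<And>x. \<rho> xm \<le> \<rho> x" using rho_inf by blast
  obtain hM where hM: "\<And>x. h x \<le> h hM" using h_sup by blast
  obtain Cf where Cf: "\<And>x u. u \<in> U x \<Longrightarrow> \<bar>f x u\<bar> \<le> Cf"
    using f_bounded unfolding bounded_iff by fastforce
  have phiU: "\<phi> x \<in> U x" for x using phi_sel by (simp add: selectors_def)
  have inB: "Qo x u \<in> tv_ball R (Qo x u)" if "u \<in> U x" for x u
    using tv_self[OF Qo_prob[OF that] Qo_sets[OF that]] Qo_prob[OF that] Qo_sets[OF that] R_range
    by (simp add: tv_ball_def)
  have Bne: "tv_ball R (Qo x u) \<noteq> {}" if "u \<in> U x" for x u using inB[OF that] by blast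
  have irho: "integrable Q \<rho> \<and> 0 \<le> integral\<^sup>L Q \<rho> \<and> integral\<^sup>L Q \<rho> \<le> \<rho> xM"
    if "Q \<in> tv_ball R N" for Q N
    using int_bounds[of Q \<rho> "\<rho> xM"] in_ball[OF that] rho_meas rho_nonneg xM by blast
  have ih: "integrable Q h \<and> 0 \<le> integral\<^sup>L Q h \<and> integral\<^sup>L Q h \<le> h hM"
    if "Q \<in> tv_ball R N" for Q N
    using int_bounds[of Q h "h hM"] in_ball[OF that] h_meas h_nonneg hM by blast
  have ilin: "integral\<^sup>L Q (\<lambda>z. c * \<rho> z + h z) = c * integral\<^sup>L Q \<rho> + integral\<^sup>L Q h"
    if "Q \<in> tv_ball R N" for Q N c
    by (rule int_lin[OF that rho_meas h_meas rho_nonneg xM h_nonneg hM])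
  define G where "G x u = (SUP Q\<in>tv_ball R (Qo x u). integral\<^sup>L Q \<rho>)" for x u
  define H where "H x u = (SUP Q\<in>tv_ball R (Qo x u). f x u + integral\<^sup>L Q h)" for x u
  have bddG: "bdd_above ((\<lambda>Q. integral\<^sup>L Q \<rho>) ` tv_ball R (Qo x u))" for x u
    by (rule bdd_aboveI[where M="\<rho> xM"]) (use irho in blast)
  have bddH: "bdd_above ((\<lambda>Q. f x u + integral\<^sup>L Q h) ` tv_ball R (Qo x u))" for x u
    by (rule bdd_aboveI[where M="f x u + h hM"]) (use ih in force)
  have G0: "0 \<le> G x u" if "u \<in> U x" for x u
    using cSUP_upper[OF inB[OF that] bddG] irho[OF inB[OF that]] unfolding G_def by linarith
  have H0: "0 \<le> H x u" if "u \<in> U x" for x u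
    using cSUP_upper[OF inB[OF that] bddH] ih[OF inB[OF that]] f_nonneg[OF that] unfolding H_def by linarith
  have Jstar0: "Jstar U f Qo R 0 h = h" by (rule ext) simp
  have Jpol0: "Jpol \<phi> f Qo R 0 h = h" by (rule ext) simp
  show ?thesis
  proof
    assume can: "canonical_triplet U f Qo R \<rho> h \<phi>"
    have Jp: "\<And>n x. Jpol \<phi> f Qo R n h x = Jstar U f Qo R n h x"
      and Js: "\<And>n x. Jstar U f Qo R n h x = real n * \<rho> x + h x"
      using can unfolding canonical_triplet_def by auto
    have Jsf: "Jstar U f Qo R n h = (\<lambda>z. real n * \<rho> z + h z)" for n by (rule ext) (simp add: Js)
    have Jpf: "Jpol \<phi> f Qo R n h = (\<lambda>z. real n * \<rho> z + h z)" for n by (rule ext) (simp add: Js Jp)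
    have Lb: "\<And>u Q. u \<in> U x \<Longrightarrow> Q \<in> tv_ball R (Qo x u) \<Longrightarrow> \<bar>integral\<^sup>L Q \<rho>\<bar> \<le> \<rho> xM" for x
      using irho by (metis abs_of_nonneg)
    have Lc: "\<And>u Q. u \<in> U x \<Longrightarrow> Q \<in> tv_ball R (Qo x u) \<Longrightarrow>
        0 \<le> f x u + integral\<^sup>L Q h \<and> f x u + integral\<^sup>L Q h \<le> Cf + h hM" for x
      using ih f_nonneg Cf by (smt (verit) abs_le_iff)
    show "\<forall>x.
       \<rho> x = (INF u\<in>U x. SUP Q\<in>tv_ball R (Qo x u). integral\<^sup>L Q \<rho>) \<and>
       \<rho> x + h x = (INF u\<in>U x. SUP Q\<in>tv_ball R (Qo x u). f x u + integral\<^sup>L Q h) \<and>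
       \<rho> x = (SUP Q\<in>tv_ball R (Qo x (\<phi> x)). integral\<^sup>L Q \<rho>) \<and>
       \<rho> x + h x = (SUP Q\<in>tv_ball R (Qo x (\<phi> x)). f x (\<phi> x) + integral\<^sup>L Q h)"
    proof
      fix x
      have eqS: "(INF u\<in>U x. SUP Q\<in>tv_ball R (Qo x u). real n * integral\<^sup>L Q \<rho> + (f x u + integral\<^sup>L Q h))
          = real n * \<rho> x + (\<rho> x + h x)" for n
      proof -
        have "Jstar U f Qo R (Suc n) h x = (INF u\<in>U x. SUP Q\<in>tv_ball R (Qo x u). real n * integral\<^sup>L Q \<rho> + (f x u + integral\<^sup>L Q h))"
          unfolding Jstar.simps(2) Jsf[of n]
        proof (intro INF_cong SUP_cong refl)
          fix u Q assume "Q \<in> tv_ball R (Qo x u)"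
          then show "f x u + integral\<^sup>L Q (\<lambda>z. real n * \<rho> z + h z) = real n * integral\<^sup>L Q \<rho> + (f x u + integral\<^sup>L Q h)"
            using ilin by simp
        qed
        then show ?thesis using Js[of "Suc n" x] by (simp add: algebra_simps)
      qed
      have eqP: "(INF u\<in>{\<phi> x}. SUP Q\<in>tv_ball R (Qo x u). real n * integral\<^sup>L Q \<rho> + (f x u + integral\<^sup>L Q h))
          = real n * \<rho> x + (\<rho> x + h x)" for n
      proof -
        have "Jpol \<phi> f Qo R (Suc n) h x = (SUP Q\<in>tv_ball R (Qo x (\<phi> x)). real n * integral\<^sup>L Q \<rho> + (f x (\<phi> x) + integral\<^sup>L Q h))"
          unfolding Jpol.simps(2) Jpf[of n]
        proof (intro SUP_cong refl)
          fix Q assume "Q \<in> tv_ball R (Qo x (\<phi> x))"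
          then show "f x (\<phi> x) + integral\<^sup>L Q (\<lambda>z. real n * \<rho> z + h z) = real n * integral\<^sup>L Q \<rho> + (f x (\<phi> x) + integral\<^sup>L Q h)"
            using ilin by simp
        qed
        then show ?thesis using Js[of "Suc n" x] Jp[of "Suc n" x] by (simp add: algebra_simps)
      qed
      have a: "\<rho> x = (INF u\<in>U x. SUP Q\<in>tv_ball R (Qo x u). integral\<^sup>L Q \<rho>)"
        by (rule L1[where a="\<lambda>Q u. integral\<^sup>L Q \<rho>" and b="\<lambda>Q u. f x u + integral\<^sup>L Q h"
              and M="\<rho> xM" and C="Cf + h hM" and c="\<rho> x + h x", OF U_ne Bne Lb Lc eqS])
      have c1': "\<rho> x = (INF u\<in>{\<phi> x}. SUP Q\<in>tv_ball R (Qo x u). integral\<^sup>L Q \<rho>)"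
        by (rule L1[where a="\<lambda>Q u. integral\<^sup>L Q \<rho>" and b="\<lambda>Q u. f x u + integral\<^sup>L Q h"
              and M="\<rho> xM" and C="Cf + h hM" and c="\<rho> x + h x", OF _ Bne Lb Lc eqP])
           (use phiU in auto)
      have c1: "\<rho> x = (SUP Q\<in>tv_ball R (Qo x (\<phi> x)). integral\<^sup>L Q \<rho>)" using c1' by simp
      have b: "\<rho> x + h x = (INF u\<in>U x. SUP Q\<in>tv_ball R (Qo x u). f x u + integral\<^sup>L Q h)"
        using Js[of 1 x] unfolding One_nat_def Jstar.simps Jstar0 by simp
      have c2: "\<rho> x + h x = (SUP Q\<in>tv_ball R (Qo x (\<phi> x)). f x (\<phi> x) + integral\<^sup>L Q h)"
        using Js[of 1 x] Jp[of 1 x] unfolding One_nat_def Jpol.simps Jpol0 by simp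
      show "\<rho> x = (INF u\<in>U x. SUP Q\<in>tv_ball R (Qo x u). integral\<^sup>L Q \<rho>) \<and>
       \<rho> x + h x = (INF u\<in>U x. SUP Q\<in>tv_ball R (Qo x u). f x u + integral\<^sup>L Q h) \<and>
       \<rho> x = (SUP Q\<in>tv_ball R (Qo x (\<phi> x)). integral\<^sup>L Q \<rho>) \<and>
       \<rho> x + h x = (SUP Q\<in>tv_ball R (Qo x (\<phi> x)). f x (\<phi> x) + integral\<^sup>L Q h)"
        using a b c1 c2 by blast
    qed

  next
    assume cond: "\<forall>x.
       \<rho> x = (INF u\<in>U x. SUP Q\<in>tv_ball R (Qo x u). integral\<^sup>L Q \<rho>) \<and>
       \<rho> x + h x = (INF u\<in>U x. SUP Q\<in>tv_ball R (Qo x u). f x u + integral\<^sup>L Q h) \<and>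
       \<rho> x = (SUP Q\<in>tv_ball R (Qo x (\<phi> x)). integral\<^sup>L Q \<rho>) \<and>
       \<rho> x + h x = (SUP Q\<in>tv_ball R (Qo x (\<phi> x)). f x (\<phi> x) + integral\<^sup>L Q h)"
    have a: "\<And>x. \<rho> x = (INF u\<in>U x. G x u)" unfolding G_def using cond by blast
    have b: "\<And>x. \<rho> x + h x = (INF u\<in>U x. H x u)" unfolding H_def using cond by blast
    have c1: "\<And>x. G x (\<phi> x) = \<rho> x" unfolding G_def using cond by metis
    have c2: "\<And>x. H x (\<phi> x) = \<rho> x + h x" unfolding H_def using cond by metis
    have bdG: "bdd_below (G x ` U x)" for x by (rule bdd_belowI[where m=0]) (use G0 in auto)
    have bdH: "bdd_below (H x ` U x)" for x by (rule bdd_belowI[where m=0]) (use H0 in auto)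
    have Gge: "\<rho> x \<le> G x u" if "u \<in> U x" for x u
      using cINF_lower[OF bdG that] a[of x] by simp
    have Hge: "\<rho> x + h x \<le> H x u" if "u \<in> U x" for x u
      using cINF_lower[OF bdH that] b[of x] by simp
    have const: "\<forall>z. \<rho> z = \<rho> xM" if Rpos: "R > 0"
    proof -
      have "\<rho> xM \<le> \<rho> xm"
      proof (rule ccontr)
        assume "\<not> \<rho> xM \<le> \<rho> xm"
        hence lt: "\<rho> xm < \<rho> xM" by simp
        define t where "t = R / 2"
        have t: "0 < t" "t \<le> 1" using Rpos R_range by (auto simp: t_def)
        define d where "d = (\<rho> xM - \<rho> xm) / 2"
        have d: "0 < d" using lt by (simp add: d_def)
        define S where "S = {z. \<rho> xm + d < \<rho> z}"
        have Sb: "S \<in> sets borel" unfolding S_def using rho_meas by measurable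
        have xMS: "xM \<in> S" unfolding S_def d_def using lt by (simp add: field_simps)
        have key: "\<rho> xm + d * t \<le> G xm u" if u: "u \<in> U xm" for u
        proof -
          obtain Q where Q: "sets Q = sets borel" "prob_space Q"
            "\<forall>A\<in>sets borel. measure Q A = (1-t) * measure (Qo xm u) A + t * indicator A xM"
            "tv_dist Q (Qo xm u) \<le> 2*t"
            using mixture[OF Qo_prob[OF u] Qo_sets[OF u], of t xM] t by auto
          have QB: "Q \<in> tv_ball R (Qo xm u)" using Q t by (simp add: tv_ball_def t_def)
          have mS: "t \<le> measure Q S" using Q(3) Sb xMS t measure_nonneg[of "Qo xm u" S]
            by simp
          interpret Qp: prob_space Q by (rule Q(2))
          have gm: "(\<lambda>z. \<rho> xm + d * indicator S z) \<in> borel_measurable borel" using Sb by measurable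
          have intg: "integrable Q (\<lambda>z. \<rho> xm + d * indicator S z)"
            using int_bounds[OF Q(2) Q(1) gm, of "\<rho> xm + d"] rho_nonneg d
            by (auto simp: indicator_def)
          have ival: "integral\<^sup>L Q (\<lambda>z. \<rho> xm + d * indicator S z) = \<rho> xm + d * measure Q S"
          proof -
            have SQ: "S \<in> sets Q" using Sb Q(1) by simp
            have gm2: "(\<lambda>z. d * indicator S z) \<in> borel_measurable borel" using Sb by measurable
            have i2: "integrable Q (\<lambda>z. d * indicator S z)"
              using int_bounds[OF Q(2) Q(1) gm2, of d] d by (auto simp: indicator_def)
            have "integral\<^sup>L Q (\<lambda>z. \<rho> xm + d * indicator S z)
                = integral\<^sup>L Q (\<lambda>z. \<rho> xm) + integral\<^sup>L Q (\<lambda>z. d * indicator S z)"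
              by (rule Bochner_Integration.integral_add[OF Qp.integrable_const i2])
            also have "integral\<^sup>L Q (\<lambda>z. \<rho> xm) = \<rho> xm" by (simp add: Qp.prob_space)
            also have "integral\<^sup>L Q (\<lambda>z. d * indicator S z) = d * measure Q S"
              using SQ by (simp add: integral_indicator Qp.emeasure_finite less_top)
            finally show ?thesis .
          qed
          have "integral\<^sup>L Q (\<lambda>z. \<rho> xm + d * indicator S z) \<le> integral\<^sup>L Q \<rho>"
            by (rule integral_mono[OF intg conjunct1[OF irho[OF QB]]])
               (auto simp: S_def indicator_def intro: xm)
          then have "\<rho> xm + d * t \<le> integral\<^sup>L Q \<rho>" using ival mS d
            by (smt (verit) mult_left_mono)
          also have "\<dots> \<le> G xm u" unfolding G_def by (rule cSUP_upper[OF QB bddG])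
          finally show ?thesis .
        qed
        have "\<rho> xm + d * t \<le> (INF u\<in>U xm. G xm u)" by (rule cINF_greatest[OF U_ne key])
        with a[of xm] have "\<rho> xm + d * t \<le> \<rho> xm" by simp
        with d t show False by (smt (verit) mult_pos_pos)
      qed
      then show ?thesis using xm xM by (metis antisym order_trans)
    qed
    have KEY: "(SUP Q\<in>tv_ball R (Qo x u). f x u + integral\<^sup>L Q (\<lambda>z. real n * \<rho> z + h z))
        = real n * G x u + H x u" if u: "u \<in> U x" for x u n
    proof (cases "R = 0")
      case True
      have ball: "tv_ball R (Qo x u) = {Qo x u}"
      proof (intro equalityI subsetI)
        fix Q assume Q: "Q \<in> tv_ball R (Qo x u)"
        have "Q = Qo x u"
          by (rule tv_zero_eq) (use Q True Qo_prob[OF u] Qo_sets[OF u] in \<open>auto simp: tv_ball_def\<close>)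
        then show "Q \<in> {Qo x u}" by simp
      qed (use inB[OF u] in auto)
      show ?thesis unfolding G_def H_def ball using ilin[OF inB[OF u]] by simp
    next
      case False
      then have Rpos: "R > 0" using R_range by simp
      have rf: "\<rho> = (\<lambda>_. \<rho> xM)" using const[OF Rpos] by (simp add: fun_eq_iff)
      have ic: "integral\<^sup>L Q \<rho> = \<rho> xM" if "Q \<in> tv_ball R N" for Q N
      proof -
        interpret Qp: prob_space Q using in_ball[OF that] by blast
        show ?thesis by (subst rf) (simp add: Qp.prob_space)
      qed
      have "(SUP Q\<in>tv_ball R (Qo x u). f x u + integral\<^sup>L Q (\<lambda>z. real n * \<rho> z + h z))
          = (SUP Q\<in>tv_ball R (Qo x u). real n * \<rho> xM + (f x u + integral\<^sup>L Q h))"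
        by (rule SUP_cong[OF refl]) (simp add: ilin ic)
      also have "\<dots> = real n * \<rho> xM + H x u"
        unfolding H_def by (rule SUP_plus_const[OF Bne[OF u] bddH])
      also have "G x u = \<rho> xM" unfolding G_def using Bne[OF u] by (simp add: ic)
      ultimately show ?thesis by simp
    qed
    have main: "(\<forall>x. Jstar U f Qo R n h x = real n * \<rho> x + h x) \<and>
                (\<forall>x. Jpol \<phi> f Qo R n h x = real n * \<rho> x + h x)" for n
    proof (induction n)
      case 0 show ?case by simp
    next
      case (Suc n)
      have Jsf: "Jstar U f Qo R n h = (\<lambda>z. real n * \<rho> z + h z)"
        using Suc.IH by (simp add: fun_eq_iff)
      have Jpf: "Jpol \<phi> f Qo R n h = (\<lambda>z. real n * \<rho> z + h z)"
        using Suc.IH by (simp add: fun_eq_iff)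
      have s: "Jstar U f Qo R (Suc n) h x = real (Suc n) * \<rho> x + h x" for x
      proof -
        have "Jstar U f Qo R (Suc n) h x = (INF u\<in>U x. real n * G x u + H x u)"
          unfolding Jstar.simps(2) Jsf[of] by (rule INF_cong[OF refl]) (rule KEY)
        also have "\<dots> = real n * \<rho> x + (\<rho> x + h x)"
        proof (rule antisym)
          have bd: "bdd_below ((\<lambda>u. real n * G x u + H x u) ` U x)"
            by (rule bdd_belowI[where m=0]) (use G0 H0 in auto)
          show "(INF u\<in>U x. real n * G x u + H x u) \<le> real n * \<rho> x + (\<rho> x + h x)"
            using cINF_lower[OF bd phiU[of x]] c1 c2 by simp
          show "real n * \<rho> x + (\<rho> x + h x) \<le> (INF u\<in>U x. real n * G x u + H x u)"
          proof (rule cINF_greatest[OF U_ne])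
            fix u assume u: "u \<in> U x"
            show "real n * \<rho> x + (\<rho> x + h x) \<le> real n * G x u + H x u"
              using Gge[OF u] Hge[OF u] by (smt (verit) mult_left_mono of_nat_0_le_iff)
          qed
        qed
        finally show ?thesis by (simp add: algebra_simps)
      qed
      have p: "Jpol \<phi> f Qo R (Suc n) h x = real (Suc n) * \<rho> x + h x" for x
        unfolding Jpol.simps(2) Jpf KEY[OF phiU] c1 c2 by (simp add: algebra_simps)
      show ?case using s p by blast
    qed
    show "canonical_triplet U f Qo R \<rho> h \<phi>"
      unfolding canonical_triplet_def
      using main rho_bounded rho_cont rho_nonneg rho_meas h_bounded h_cont h_nonneg h_meas phi_sel
      by simp

  qed
qed


end
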